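(* For any unit-cost instance of the Correlated Pandora's Problem (all $c_i=1$) whose volumes are positive even integers, $\mathrm{CP}_{\textsc{Unit}}\le\mathrm{OPT}$, where $\mathrm{CP}_{\textsc{Unit}}$ is the optimal value of the Unit-Cost Convex Program.
   Context: Correlated Pandora's Problem: boxes $[n]$, box $i$ has opening cost $c_i$ (here $c_i=1$) and volume $v_i$; the scenario $v=(v_1,\dots,v_n)$ is drawn from a known, possibly correlated distribution $\mathcal{D}$. Opening a box costs its cost and reveals its volume; an algorithm repeatedly opens another box or stops and takes an opened box of minimum volume; the objective is total opening cost plus taken volume, minimized in expectation. A partially adaptive algorithm fixes the opening order in advance (independent of $v$) and adaptively decides when to stop; $\mathrm{OPT}$ is the minimum expected objective of a partially adaptive algorithm. Write $x_+=\max\{x,0\}$. Unit-Cost Convex Program: variables $x_i(t)\ge 0$ for $i,t\in[n]$ with $\sum_{i\in[n]}x_i(t)\le 1$ for all $t\in[n]$; minimize $\mathbf{E}_{v\sim\mathcal{D}}\sum_{t=1}^\infty\big(1-\sum_{i\in[n]}\sum_{t'\in[n],\,t'<t-v_i}x_i(t')\big)_+$. *)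

theory Defs
  imports "HOL-Probability.Probability"
begin

text \<open>A scenario is a function
  v :: nat \<Rightarrow> nat (only the values v 1, ..., v n matter); the distribution
  is a pmf over scenarios. All opening costs are 1.\<close>

text \<open>Partially adaptive algorithm: a fixed opening order sigma (sigma k is the box
  opened in step k, a bijection of [n]) and a non-anticipating stopping time tau:
  tau v is the number of boxes opened in scenario v; it lies in [n] (at least one
  box is opened, so that a box can be taken), and whether to stop may only depend
  on the volumes revealed so far.\<close>
definition partially_adaptive :: "nat \<Rightarrow> (nat \<Rightarrow> nat) \<Rightarrow> ((nat \<Rightarrow> nat) \<Rightarrow> nat) \<Rightarrow> bool" where
  "partially_adaptive n \<sigma> \<tau> \<longleftrightarrow>
     bij_betw \<sigma> {1..n} {1..n} \<and>
     (\<forall>v. \<tau> v \<in> {1..n}) \<and>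
     (\<forall>v w. (\<forall>k\<in>{1..\<tau> v}. w (\<sigma> k) = v (\<sigma> k)) \<longrightarrow> \<tau> w = \<tau> v)"

definition pa_cost :: "(nat \<Rightarrow> nat) \<Rightarrow> ((nat \<Rightarrow> nat) \<Rightarrow> nat) \<Rightarrow> (nat \<Rightarrow> nat) \<Rightarrow> nat" where
  "pa_cost \<sigma> \<tau> v = \<tau> v + Min ((\<lambda>k. v (\<sigma> k)) ` {1..\<tau> v})"

definition OPT_pa :: "nat \<Rightarrow> (nat \<Rightarrow> nat) pmf \<Rightarrow> ennreal" where
  "OPT_pa n D = (INF (\<sigma>, \<tau>) \<in> {(\<sigma>, \<tau>). partially_adaptive n \<sigma> \<tau>}.
                   \<integral>\<^sup>+ v. of_nat (pa_cost \<sigma> \<tau> v) \<partial>(measure_pmf D))"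

definition unit_cp_feasible :: "nat \<Rightarrow> (nat \<Rightarrow> nat \<Rightarrow> real) \<Rightarrow> bool" where
  "unit_cp_feasible n x \<longleftrightarrow>
     (\<forall>i\<in>{1..n}. \<forall>t\<in>{1..n}. x i t \<ge> 0) \<and>
     (\<forall>t\<in>{1..n}. (\<Sum>i\<in>{1..n}. x i t) \<le> 1)"

text \<open>Objective; the condition t' < t - v_i is written t' + v_i < t, and the sum
  over t = 1, 2, ... is taken in the extended nonnegative reals (it may diverge).\<close>
definition unit_cp_obj :: "nat \<Rightarrow> (nat \<Rightarrow> nat) pmf \<Rightarrow> (nat \<Rightarrow> nat \<Rightarrow> real) \<Rightarrow> ennreal" where
  "unit_cp_obj n D x =
     (\<integral>\<^sup>+ v. (\<Sum>t. ennreal (max 0 (1 - (\<Sum>i\<in>{1..n}. \<Sum>t'\<in>{t'\<in>{1..n}. t' + v i < Suc t}. x i t'))))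
        \<partial>(measure_pmf D))"

definition CP_unit :: "nat \<Rightarrow> (nat \<Rightarrow> nat) pmf \<Rightarrow> ennreal" where
  "CP_unit n D = (INF x \<in> {x. unit_cp_feasible n x}. unit_cp_obj n D x)"

end

theory Submission
  imports Defs
begin

lemma per_scenario:
  fixes \<sigma> :: "nat \<Rightarrow> nat" and \<tau> :: "(nat \<Rightarrow> nat) \<Rightarrow> nat" and v :: "nat \<Rightarrow> nat"
  assumes pa: "partially_adaptive n \<sigma> \<tau>"
  defines "x \<equiv> (\<lambda>i t. if \<sigma> t = i then 1 else (0::real))"
  shows "(\<Sum>t. ennreal (max 0 (1 - (\<Sum>i\<in>{1..n}. \<Sum>t'\<in>{t'\<in>{1..n}. t' + v i < Suc t}. x i t'))))
         \<le> of_nat (pa_cost \<sigma> \<tau> v)"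
proof -
  have pa': "bij_betw \<sigma> {1..n} {1..n} \<and> (\<forall>v. \<tau> v \<in> {1..n})"
    using pa unfolding partially_adaptive_def by (rule conjE) (rule conjI, assumption, erule conjunct1)
  have bij: "bij_betw \<sigma> {1..n} {1..n}" using pa' by (rule conjunct1)
  have tau: "\<tau> v \<in> {1..n}" using pa' by blast
  let ?S = "(\<lambda>k. v (\<sigma> k)) ` {1..\<tau> v}"
  have fin: "finite ?S" and ne: "?S \<noteq> {}" using tau by auto
  have "Min ?S \<in> ?S" using Min_in[OF fin ne] .
  then obtain k0 where k0: "k0 \<in> {1..\<tau> v}" "Min ?S = v (\<sigma> k0)" by auto
  have k0n: "k0 \<in> {1..n}" using k0 tau by auto
  have sk0: "\<sigma> k0 \<in> {1..n}" using bij k0n bij_betwE by blast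
  define N where "N = k0 + v (\<sigma> k0)"
  define f where "f = (\<lambda>t. ennreal (max 0 (1 - (\<Sum>i\<in>{1..n}. \<Sum>t'\<in>{t'\<in>{1..n}. t' + v i < Suc t}. x i t'))))"
  have nn: "\<And>i t'. 0 \<le> x i t'" unfolding x_def by auto
  have zero: "f t = 0" if "t \<ge> N" for t
  proof -
    have "1 = x (\<sigma> k0) k0" unfolding x_def by simp
    also have "\<dots> \<le> (\<Sum>t'\<in>{t'\<in>{1..n}. t' + v (\<sigma> k0) < Suc t}. x (\<sigma> k0) t')"
      by (rule member_le_sum) (use k0n that N_def nn in auto)
    also have "\<dots> \<le> (\<Sum>i\<in>{1..n}. \<Sum>t'\<in>{t'\<in>{1..n}. t' + v i < Suc t}. x i t')"
      by (rule member_le_sum[where f="\<lambda>i. \<Sum>t'\<in>{t'\<in>{1..n}. t' + v i < Suc t}. x i t'"])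
         (use sk0 nn in \<open>auto intro: sum_nonneg\<close>)
    finally show ?thesis unfolding f_def by simp
  qed
  have le1: "f t \<le> 1" for t
  proof -
    have "0 \<le> (\<Sum>i\<in>{1..n}. \<Sum>t'\<in>{t'\<in>{1..n}. t' + v i < Suc t}. x i t')"
      using nn by (auto intro!: sum_nonneg)
    then show ?thesis unfolding f_def by simp
  qed
  have "(\<Sum>t. f t) = (\<Sum>t<N. f t)"
    by (rule suminf_finite) (auto simp: zero)
  also have "\<dots> \<le> (\<Sum>t<N. 1)" by (rule sum_mono) (rule le1)
  also have "\<dots> = of_nat N" by simp
  also have "\<dots> \<le> of_nat (pa_cost \<sigma> \<tau> v)"
    using k0 unfolding pa_cost_def N_def by simp
  finally show ?thesis unfolding f_def .
qed

theorem lemma3p1: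
  fixes n :: nat and D :: "(nat \<Rightarrow> nat) pmf"
  assumes "\<forall>v\<in>set_pmf D. \<forall>i\<in>{1..n}. v i > 0 \<and> even (v i)"
  shows "CP_unit n D \<le> OPT_pa n D"
  unfolding OPT_pa_def
proof (rule INF_greatest, clarify)
  fix \<sigma> \<tau> assume pa: "partially_adaptive n \<sigma> \<tau>"
  define x where "x = (\<lambda>i t. if \<sigma> t = i then 1 else (0::real))"
  have feas: "unit_cp_feasible n x"
    unfolding unit_cp_feasible_def
  proof safe
    fix t assume "t \<in> {1..n}"
    have "(\<Sum>i\<in>{1..n}. x i t) = (\<Sum>i\<in>{1..n}. if i = \<sigma> t then 1 else 0)"
      unfolding x_def by (rule sum.cong) auto
    also have "\<dots> \<le> 1" by (simp add: sum.delta)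
    finally show "(\<Sum>i\<in>{1..n}. x i t) \<le> 1" .
  qed (auto simp: x_def)
  have "CP_unit n D \<le> unit_cp_obj n D x"
    unfolding CP_unit_def using feas by (auto intro: INF_lower)
  also have "\<dots> \<le> \<integral>\<^sup>+ v. of_nat (pa_cost \<sigma> \<tau> v) \<partial>(measure_pmf D)"
    unfolding unit_cp_obj_def
    by (rule nn_integral_mono) (use per_scenario[OF pa] in \<open>simp add: x_def\<close>)
  finally show "CP_unit n D \<le> \<integral>\<^sup>+ v. of_nat (pa_cost \<sigma> \<tau> v) \<partial>(measure_pmf D)" .
qed

end
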